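(* Let $\mathcal{L}$ be a family of oriented balanced algebraic laws over a signature $\Sigma$, let $\phi$ be an injective endomorphism of the geometry group $G_{\mathcal{L}}$, and let $\mathtt{Cc}:T_\Sigma(x)\to G_{\mathcal{L}}$ be a $\phi$-blueprint for $\mathcal{L}$. Then for all words $w,w'\in\mathcal{W}_{\mathcal{L}}$, if $\mathit{eval}(w)\sim\mathit{eval}(w')$ then $\mathtt{eval}(w)=\mathtt{eval}(w')$ in $G_{\mathcal{L}}$.
   Context: $T_\Sigma(x)$: terms in the single variable $x$ over $\Sigma$ (general terms use an infinite set of variables). A law is balanced if both sides contain the same variables. Addresses are finite sequences of positive integers, $t/\alpha$ the subterm at $\alpha$. For $L=(l,r)\in\mathcal{L}$ and an address $\alpha$, $O^+_{L,\alpha}$ is the partial map sending $t$ with $t/\alpha=l\sigma$ to the term obtained by replacing that subterm by $r\sigma$; $O^-_{L,\alpha}$ is its inverse. $\mathcal{W}_{\mathcal{L}}$ is the free monoid on the letters $O^{\pm}_{L,\alpha}$; $\mathit{eval}(w)$ is the partial map on terms obtained by applying the letters of $w$ left to right; $t\cdot f$ is the image of $t$ under $f$. For partial maps $f,g$ on terms, $f\sim g$ means there is at least one term $u$ on which both are defined and $u\cdot f=u\cdot g$. The geometry group $G_{\mathcal{L}}$ is the group presented by generators $g_{L,\alpha}$ and a set of relations $u=v$ between positive words (in the letters $O^+_{L,\alpha}$) that hold as equalities of partial maps (the confluence relations); $\mathtt{eval}:\mathcal{W}_{\mathcal{L}}\to G_{\mathcal{L}}$ sends $O^+_{L,\alpha}\mapsto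 g_{L,\alpha}$, $O^-_{L,\alpha}\mapsto g_{L,\alpha}^{-1}$. $\mathtt{Cc}$ is a $\phi$-blueprint if $\mathtt{Cc}(t\cdot\mathit{eval}(w))=\mathtt{Cc}(t)\cdot\phi(\mathtt{eval}(w))$ for all $t\in T_\Sigma(x)$ and $w\in\mathcal{W}_{\mathcal{L}}$ with $t\cdot\mathit{eval}(w)$ defined. *)

theory Defs
  imports "HOL-Algebra.Group"
begin

text \<open>A signature is a type of function symbols together with an arity map.\<close>

datatype ('f, 'v) trm = V 'v | F 'f "('f, 'v) trm list"

fun wf_trm :: "('f \<Rightarrow> nat) \<Rightarrow> ('f, 'v) trm \<Rightarrow> bool" where
  "wf_trm ar (V x) = True"
| "wf_trm ar (F f ts) = (length ts = ar f \<and> (\<forall>t\<in>set ts. wf_trm ar t))"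

fun vars :: "('f, 'v) trm \<Rightarrow> 'v set" where
  "vars (V x) = {x}"
| "vars (F f ts) = (\<Union>t\<in>set ts. vars t)"

fun subst :: "('v \<Rightarrow> ('f, 'w) trm) \<Rightarrow> ('f, 'v) trm \<Rightarrow> ('f, 'w) trm" where
  "subst \<sigma> (V x) = \<sigma> x"
| "subst \<sigma> (F f ts) = F f (map (subst \<sigma>) ts)"

text \<open>T_Sigma(x): terms in the single variable x (type unit of variables), well-formed.\<close>
definition one_var_terms :: "('f \<Rightarrow> nat) \<Rightarrow> ('f, unit) trm set" where
  "one_var_terms ar = {t. wf_trm ar t}"

type_synonym 'f law = "('f, nat) trm \<times> ('f, nat) trm"

definition balanced_law :: "('f \<Rightarrow> nat) \<Rightarrow> 'f law \<Rightarrow> bool" where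
  "balanced_law ar L = (wf_trm ar (fst L) \<and> wf_trm ar (snd L) \<and> vars (fst L) = vars (snd L))"

type_synonym addr = "nat list"

definition addresses :: "addr set" where
  "addresses = {\<alpha>. \<forall>i\<in>set \<alpha>. 0 < i}"

fun subterm_at :: "('f, 'v) trm \<Rightarrow> addr \<Rightarrow> ('f, 'v) trm option" where
  "subterm_at t [] = Some t"
| "subterm_at (V x) (i # \<alpha>) = None"
| "subterm_at (F f ts) (i # \<alpha>) =
     (if 1 \<le> i \<and> i \<le> length ts then subterm_at (ts ! (i - 1)) \<alpha> else None)"

fun replace_at :: "('f, 'v) trm \<Rightarrow> addr \<Rightarrow> ('f, 'v) trm \<Rightarrow> ('f, 'v) trm" where
  "replace_at t [] s = s"
| "replace_at (V x) (i # \<alpha>) s = V x"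
| "replace_at (F f ts) (i # \<alpha>) s = F f (ts[i - 1 := replace_at (ts ! (i - 1)) \<alpha> s])"

text \<open>O^+_{L,alpha}: replace t/alpha = l sigma by r sigma (for balanced L the result
  does not depend on the choice of sigma).\<close>
definition Opos :: "'f law \<Rightarrow> addr \<Rightarrow> ('f, unit) trm \<Rightarrow> ('f, unit) trm option" where
  "Opos L \<alpha> t =
     (case subterm_at t \<alpha> of
        None \<Rightarrow> None
      | Some s \<Rightarrow>
          (if \<exists>\<sigma>. subst \<sigma> (fst L) = s
           then Some (replace_at t \<alpha> (subst (SOME \<sigma>. subst \<sigma> (fst L) = s) (snd L)))
           else None))"

definition Oneg :: "'f law \<Rightarrow> addr \<Rightarrow> ('f, unit) trm \<Rightarrow> ('f, unit) trm option" where
  "Oneg L \<alpha> t = (if \<exists>!s. Opos L \<alpha> s = Some t then Some (THE s. Opos L \<alpha> s = Some t) else None)"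

text \<open>A letter (True, (L, alpha)) is O^+_{L,alpha}; (False, (L, alpha)) is O^-_{L,alpha}.\<close>
type_synonym 'f letter = "bool \<times> ('f law \<times> addr)"

definition generators :: "'f law set \<Rightarrow> ('f law \<times> addr) set" where
  "generators Ls = Ls \<times> addresses"

definition words :: "'f law set \<Rightarrow> 'f letter list set" where
  "words Ls = {w. \<forall>a\<in>set w. snd a \<in> generators Ls}"

fun apply_letter :: "'f letter \<Rightarrow> ('f, unit) trm \<Rightarrow> ('f, unit) trm option" where
  "apply_letter (b, (L, \<alpha>)) = (if b then Opos L \<alpha> else Oneg L \<alpha>)"

fun eval_word :: "'f letter list \<Rightarrow> ('f, unit) trm \<Rightarrow> ('f, unit) trm option" where
  "eval_word [] t = Some t"
| "eval_word (a # w) t = Option.bind (apply_letter a t) (eval_word w)"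

definition pm_sim :: "('f \<Rightarrow> nat) \<Rightarrow> (('f, unit) trm \<Rightarrow> ('f, unit) trm option)
    \<Rightarrow> (('f, unit) trm \<Rightarrow> ('f, unit) trm option) \<Rightarrow> bool" where
  "pm_sim ar f g = (\<exists>u\<in>one_var_terms ar. f u \<noteq> None \<and> g u \<noteq> None \<and> f u = g u)"

definition pos_word :: "('f law \<times> addr) list \<Rightarrow> 'f letter list" where
  "pos_word u = map (\<lambda>g. (True, g)) u"

inductive_set pres_cong :: "'f law set \<Rightarrow> (('f law \<times> addr) list \<times> ('f law \<times> addr) list) set
    \<Rightarrow> ('f letter list \<times> 'f letter list) set"
  for Ls R where
  refl: "w \<in> words Ls \<Longrightarrow> (w, w) \<in> pres_cong Ls R"
| sym: "(v, w) \<in> pres_cong Ls R \<Longrightarrow> (w, v) \<in> pres_cong Ls R"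
| trans: "(u, v) \<in> pres_cong Ls R \<Longrightarrow> (v, w) \<in> pres_cong Ls R \<Longrightarrow> (u, w) \<in> pres_cong Ls R"
| cancel: "xs \<in> words Ls \<Longrightarrow> ys \<in> words Ls \<Longrightarrow> g \<in> generators Ls \<Longrightarrow>
     (xs @ [(b, g), (\<not> b, g)] @ ys, xs @ ys) \<in> pres_cong Ls R"
| rel: "(u, v) \<in> R \<Longrightarrow> xs \<in> words Ls \<Longrightarrow> ys \<in> words Ls \<Longrightarrow>
     (xs @ pos_word u @ ys, xs @ pos_word v @ ys) \<in> pres_cong Ls R"

definition geom_group :: "'f law set \<Rightarrow> (('f law \<times> addr) list \<times> ('f law \<times> addr) list) set
    \<Rightarrow> 'f letter list set monoid" where
  "geom_group Ls R =
     \<lparr> carrier = words Ls // pres_cong Ls R,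
       mult = (\<lambda>A B. pres_cong Ls R `` {a @ b | a b. a \<in> A \<and> b \<in> B}),
       one = pres_cong Ls R `` {[]} \<rparr>"

text \<open>The map eval : W_L -> G_L (letter O^+ to g, O^- to g^{-1}).\<close>
definition geval :: "'f law set \<Rightarrow> (('f law \<times> addr) list \<times> ('f law \<times> addr) list) set
    \<Rightarrow> 'f letter list \<Rightarrow> 'f letter list set" where
  "geval Ls R w = pres_cong Ls R `` {w}"

definition confluence_relations :: "('f \<Rightarrow> nat) \<Rightarrow> 'f law set
    \<Rightarrow> (('f law \<times> addr) list \<times> ('f law \<times> addr) list) set \<Rightarrow> bool" where
  "confluence_relations ar Ls R =
     (\<forall>(u, v)\<in>R. set u \<subseteq> generators Ls \<and> set v \<subseteq> generators Ls \<and>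
        (\<forall>t\<in>one_var_terms ar. eval_word (pos_word u) t = eval_word (pos_word v) t))"

definition is_blueprint :: "('f \<Rightarrow> nat) \<Rightarrow> 'f law set
    \<Rightarrow> (('f law \<times> addr) list \<times> ('f law \<times> addr) list) set
    \<Rightarrow> ('f letter list set \<Rightarrow> 'f letter list set)
    \<Rightarrow> (('f, unit) trm \<Rightarrow> 'f letter list set) \<Rightarrow> bool" where
  "is_blueprint ar Ls R \<phi> Cc =
     ((\<forall>t\<in>one_var_terms ar. Cc t \<in> carrier (geom_group Ls R)) \<and>
      (\<forall>t\<in>one_var_terms ar. \<forall>w\<in>words Ls. \<forall>t'. eval_word w t = Some t' \<longrightarrow>
          Cc t' = Cc t \<otimes>\<^bsub>geom_group Ls R\<^esub> \<phi> (geval Ls R w)))"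

end

theory Submission
  imports Defs
begin

lemma pc_words:
  assumes "(v, w) \<in> pres_cong Ls R" "confluence_relations ar Ls R"
  shows "v \<in> words Ls \<and> w \<in> words Ls"
  using assms
proof (induction rule: pres_cong.induct)
  case (rel u v xs ys)
  have "set u \<subseteq> generators Ls \<and> set v \<subseteq> generators Ls"
    using rel by (auto simp: confluence_relations_def)
  then show ?case using rel
    by (auto simp: words_def pos_word_def)
qed (auto simp: words_def)

lemma pc_prefix:
  assumes "(v, w) \<in> pres_cong Ls R" "xs \<in> words Ls" "confluence_relations ar Ls R"
  shows "(xs @ v, xs @ w) \<in> pres_cong Ls R"
  using assms
proof (induction rule: pres_cong.induct)
  case (refl w)
  then show ?case by (intro pres_cong.refl) (auto simp: words_def)
next
  case (sym v w)
  then show ?case by (blast intro: pres_cong.sym)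
next
  case (trans u v w)
  then show ?case by (blast intro: pres_cong.trans)
next
  case (cancel xs' ys g b)
  have "xs @ xs' \<in> words Ls" using cancel by (auto simp: words_def)
  from pres_cong.cancel[OF this cancel(2,3), where b=b] show ?case by simp
next
  case (rel u v xs' ys)
  have "xs @ xs' \<in> words Ls" using rel by (auto simp: words_def)
  from pres_cong.rel[OF rel(1) this rel(3)] show ?case by simp
qed

lemma pc_suffix:
  assumes "(v, w) \<in> pres_cong Ls R" "ys \<in> words Ls" "confluence_relations ar Ls R"
  shows "(v @ ys, w @ ys) \<in> pres_cong Ls R"
  using assms
proof (induction rule: pres_cong.induct)
  case (refl w)
  then show ?case by (intro pres_cong.refl) (auto simp: words_def)
next
  case (sym v w)
  then show ?case by (blast intro: pres_cong.sym)
next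
  case (trans u v w)
  then show ?case by (blast intro: pres_cong.trans)
next
  case (cancel xs' ys' g b)
  have "ys' @ ys \<in> words Ls" using cancel by (auto simp: words_def)
  from pres_cong.cancel[OF cancel(1) this cancel(3), where b=b] show ?case by simp
next
  case (rel u v xs' ys')
  have "ys' @ ys \<in> words Ls" using rel by (auto simp: words_def)
  from pres_cong.rel[OF rel(1) rel(2) this] show ?case by simp
qed

definition inv_w :: "'f letter list \<Rightarrow> 'f letter list" where
  "inv_w c = rev (map (\<lambda>(b, g). (\<not> b, g)) c)"

lemma inv_w_words: "c \<in> words Ls \<Longrightarrow> inv_w c \<in> words Ls"
  by (auto simp: words_def inv_w_def)

lemma inv_cancel:
  assumes "c \<in> words Ls" "a \<in> words Ls"
  shows "(inv_w c @ c @ a, a) \<in> pres_cong Ls R"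
  using assms
proof (induction c)
  case Nil
  then show ?case by (simp add: inv_w_def pres_cong.refl)
next
  case (Cons x c)
  obtain b g where x: "x = (b, g)" by (cases x)
  have cw: "c \<in> words Ls" and g: "g \<in> generators Ls" using Cons.prems x by (auto simp: words_def)
  have ca: "c @ a \<in> words Ls" using cw Cons.prems by (auto simp: words_def)
  have "(inv_w c @ [(\<not> b, g), (\<not> \<not> b, g)] @ (c @ a), inv_w c @ (c @ a)) \<in> pres_cong Ls R"
    by (rule pres_cong.cancel[OF inv_w_words[OF cw] ca g])
  moreover have "inv_w (x # c) @ (x # c) @ a = inv_w c @ [(\<not> b, g), (\<not> \<not> b, g)] @ (c @ a)"
    by (simp add: inv_w_def x)
  ultimately show ?case using Cons.IH[OF cw Cons.prems(2)] by (metis pres_cong.trans)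
qed

lemma class_mult:
  assumes "a \<in> words Ls" "b \<in> words Ls" "confluence_relations ar Ls R"
  shows "mult (geom_group Ls R) (pres_cong Ls R `` {a}) (pres_cong Ls R `` {b})
       = pres_cong Ls R `` {a @ b}"
proof -
  let ?S = "{x @ y | x y. x \<in> pres_cong Ls R `` {a} \<and> y \<in> pres_cong Ls R `` {b}}"
  have sub: "(a @ b, z) \<in> pres_cong Ls R" if "z \<in> ?S" for z
  proof -
    from that obtain x y where z: "z = x @ y" and xa: "(a, x) \<in> pres_cong Ls R"
      and yb: "(b, y) \<in> pres_cong Ls R" by auto
    have "x \<in> words Ls" using pc_words[OF xa assms(3)] by simp
    have "(a @ b, x @ b) \<in> pres_cong Ls R" by (rule pc_suffix[OF xa assms(2,3)])
    moreover have "(x @ b, x @ y) \<in> pres_cong Ls R" by (rule pc_prefix[OF yb \<open>x \<in> words Ls\<close> assms(3)])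
    ultimately show ?thesis using z by (metis pres_cong.trans)
  qed
  have ab: "a @ b \<in> ?S"
    using assms by (auto intro!: pres_cong.refl)
  show ?thesis
  proof -
    have "pres_cong Ls R `` ?S = pres_cong Ls R `` {a @ b}"
    proof (intro Set.set_eqI iffI)
      fix z assume "z \<in> pres_cong Ls R `` ?S"
      then obtain y where "y \<in> ?S" "(y, z) \<in> pres_cong Ls R" by blast
      then show "z \<in> pres_cong Ls R `` {a @ b}" using sub by (blast intro: pres_cong.trans)
    next
      fix z assume "z \<in> pres_cong Ls R `` {a @ b}"
      then show "z \<in> pres_cong Ls R `` ?S" using ab by blast
    qed
    then show ?thesis unfolding geom_group_def by simp
  qed
qed

lemma carrier_rep:
  "A \<in> carrier (geom_group Ls R) \<Longrightarrow> \<exists>a\<in>words Ls. A = pres_cong Ls R `` {a}"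
  by (auto simp: geom_group_def quotient_def)

theorem proposition4p8:
  fixes ar :: "'f \<Rightarrow> nat"
    and Ls :: "'f law set"
    and R :: "(('f law \<times> addr) list \<times> ('f law \<times> addr) list) set"
    and \<phi> :: "'f letter list set \<Rightarrow> 'f letter list set"
    and Cc :: "('f, unit) trm \<Rightarrow> 'f letter list set"
  assumes laws: "\<forall>L\<in>Ls. balanced_law ar L"
    and conf: "confluence_relations ar Ls R"
    and hom: "\<phi> \<in> hom (geom_group Ls R) (geom_group Ls R)"
    and inj: "inj_on \<phi> (carrier (geom_group Ls R))"
    and bp: "is_blueprint ar Ls R \<phi> Cc"
    and w: "w \<in> words Ls" and w': "w' \<in> words Ls"
    and sim: "pm_sim ar (eval_word w) (eval_word w')"
  shows "geval Ls R w = geval Ls R w'"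
proof -
  let ?G = "geom_group Ls R"
  from sim obtain u t where u: "u \<in> one_var_terms ar" and t1: "eval_word w u = Some t"
    and t2: "eval_word w' u = Some t"
    unfolding pm_sim_def by auto
  have e1: "Cc t = Cc u \<otimes>\<^bsub>?G\<^esub> \<phi> (geval Ls R w)" using bp u w t1 by (auto simp: is_blueprint_def)
  have e2: "Cc t = Cc u \<otimes>\<^bsub>?G\<^esub> \<phi> (geval Ls R w')" using bp u w' t2 by (auto simp: is_blueprint_def)
  have gw: "geval Ls R w \<in> carrier ?G" using w by (auto simp: geval_def geom_group_def intro: quotientI)
  have gw': "geval Ls R w' \<in> carrier ?G" using w' by (auto simp: geval_def geom_group_def intro: quotientI)
  have pw: "\<phi> (geval Ls R w) \<in> carrier ?G" using hom gw by (auto simp: hom_def)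
  have pw': "\<phi> (geval Ls R w') \<in> carrier ?G" using hom gw' by (auto simp: hom_def)
  have cu: "Cc u \<in> carrier ?G" using bp u by (auto simp: is_blueprint_def)
  obtain c where c: "c \<in> words Ls" "Cc u = pres_cong Ls R `` {c}" using carrier_rep[OF cu] by blast
  obtain a where a: "a \<in> words Ls" "\<phi> (geval Ls R w) = pres_cong Ls R `` {a}" using carrier_rep[OF pw] by blast
  obtain b where b: "b \<in> words Ls" "\<phi> (geval Ls R w') = pres_cong Ls R `` {b}" using carrier_rep[OF pw'] by blast
  have "pres_cong Ls R `` {c @ a} = pres_cong Ls R `` {c @ b}"
    using e1 e2 class_mult[OF c(1) a(1) conf] class_mult[OF c(1) b(1) conf] a b c by simp
  moreover have "c @ b \<in> words Ls" using c b by (auto simp: words_def)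
  ultimately have "(c @ a, c @ b) \<in> pres_cong Ls R"
    by (metis ImageE pres_cong.refl pres_cong.sym singletonD singletonI Image_singleton_iff)
  hence "(inv_w c @ c @ a, inv_w c @ c @ b) \<in> pres_cong Ls R"
    using pc_prefix[OF _ inv_w_words[OF c(1)] conf] by simp
  hence ab: "(a, b) \<in> pres_cong Ls R"
    using inv_cancel[OF c(1) a(1), of R] inv_cancel[OF c(1) b(1), of R]
    by (metis pres_cong.sym pres_cong.trans)
  have "pres_cong Ls R `` {a} = pres_cong Ls R `` {b}"
  proof (intro Set.set_eqI iffI)
    fix x assume "x \<in> pres_cong Ls R `` {a}"
    then show "x \<in> pres_cong Ls R `` {b}" using ab by (auto intro: pres_cong.trans pres_cong.sym)
  next
    fix x assume "x \<in> pres_cong Ls R `` {b}"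
    then show "x \<in> pres_cong Ls R `` {a}" using ab by (auto intro: pres_cong.trans)
  qed
  hence "\<phi> (geval Ls R w) = \<phi> (geval Ls R w')" using a b by simp
  thus ?thesis using inj gw gw' by (auto dest: inj_onD)
qed

end
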